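(* Let $k$ be a non-archimedean local field of characteristic different from $2$, let $G=\mathrm{GSp}(4,k)$, and let $P$, $Q$, $H$, $\mathbf{s}_2$ be as in the context. Then $G=QH$, and there is a disjoint double coset decomposition $G=PH\sqcup P\mathbf{s}_2H$.
   Context: $G=\mathrm{GSp}(4,k)=\{g\in \mathrm{GL}(4,k)\mid g^tJg=\lambda_G(g)J\}$ with $J=\begin{pmatrix}0&E_2\\-E_2&0\end{pmatrix}$ and similitude factor $\lambda_G(g)\in k^\times$. Let $e_1,e_2,e_1^*,e_2^*$ be the standard basis of $k^4$ and $L_0=ke_1\oplus ke_2$. $P$ is the Siegel parabolic subgroup (the stabilizer of $L_0$ in $G$) and $Q$ is the Klingen parabolic subgroup (the stabilizer of the line $ke_1$ in $G$). $\mathbf{s}_2=\begin{pmatrix}1&0&0&0\\0&0&0&1\\0&0&1&0\\0&-1&0&0\end{pmatrix}$. Fix a non-square $\alpha\in k^\times$, $K=k(\sqrt{\alpha})$, and write $a=a_1+a_2\sqrt\alpha$ ($a_1,a_2\in k$) for $a\in K$. Let $H=\{g\in\mathrm{GL}(2,K)\mid \det g\in k^\times\}$, identified with a subgroup of $G$ via the embedding $\begin{pmatrix}a&b\\c&d\end{pmatrix}\mapsto \begin{pmatrix} a_1&a_2\alpha&b_1&b_2\\ a_2&a_1&b_2&b_1/\alpha\\ c_1&c_2\alpha&d_1&d_2\\ c_2\alpha&c_1\alpha&d_2\alpha&d_1\end{pmatrix}.$ *)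

theory Defs
  imports "Jordan_Normal_Form.Determinant"
begin

definition nonarch_local_field_abs :: "('a::field \<Rightarrow> real) \<Rightarrow> bool" where
  "nonarch_local_field_abs v \<longleftrightarrow>
     (\<forall>x. v x \<ge> 0) \<and> (\<forall>x. v x = 0 \<longleftrightarrow> x = 0) \<and>
     (\<forall>x y. v (x * y) = v x * v y) \<and>
     (\<forall>x y. v (x + y) \<le> max (v x) (v y)) \<and>
     (\<exists>x. x \<noteq> 0 \<and> v x \<noteq> 1) \<and>
     (\<exists>c::real. 0 < c \<and> c < 1 \<and> (\<forall>x. x \<noteq> 0 \<longrightarrow> (\<exists>n::int. v x = c powi n))) \<and>
     (\<forall>s::nat \<Rightarrow> 'a. (\<forall>e>0. \<exists>N. \<forall>m\<ge>N. \<forall>n\<ge>N. v (s m - s n) < e) \<longrightarrow>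
                      (\<exists>l. \<forall>e>0. \<exists>N. \<forall>n\<ge>N. v (s n - l) < e)) \<and>
     finite ({x. v x \<le> 1} // {(x, y). v x \<le> 1 \<and> v y \<le> 1 \<and> v (x - y) < 1})"

definition nonarch_local_field :: "'a::field itself \<Rightarrow> bool" where
  "nonarch_local_field _ \<longleftrightarrow> (\<exists>v::'a \<Rightarrow> real. nonarch_local_field_abs v)"

definition Jmat :: "'a::field mat" where
  "Jmat = mat_of_rows_list 4 [[0,0,1,0],[0,0,0,1],[-1,0,0,0],[0,-1,0,0]]"

definition GSp4 :: "'a::field mat set" where
  "GSp4 = {g \<in> carrier_mat 4 4. det g \<noteq> 0 \<and>
             (\<exists>lam. lam \<noteq> 0 \<and> transpose_mat g * Jmat * g = lam \<cdot>\<^sub>m Jmat)}"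

definition L0 :: "'a::field vec set" where
  "L0 = {v \<in> carrier_vec 4. v $ 2 = 0 \<and> v $ 3 = 0}"

definition line_e1 :: "'a::field vec set" where
  "line_e1 = {c \<cdot>\<^sub>v unit_vec 4 0 | c. True}"

definition SiegelP :: "'a::field mat set" where
  "SiegelP = {g \<in> GSp4. (\<lambda>v. g *\<^sub>v v) ` L0 = L0}"

definition KlingenQ :: "'a::field mat set" where
  "KlingenQ = {g \<in> GSp4. (\<lambda>v. g *\<^sub>v v) ` line_e1 = line_e1}"

definition s2 :: "'a::field mat" where
  "s2 = mat_of_rows_list 4 [[1,0,0,0],[0,0,0,1],[0,0,1,0],[0,-1,0,0]]"

(* Elements of K = k(sqrt alpha) represented as pairs (a1,a2) = a1 + a2 sqrt alpha *)
definition Kmul :: "'a::field \<Rightarrow> 'a \<times> 'a \<Rightarrow> 'a \<times> 'a \<Rightarrow> 'a \<times> 'a" where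
  "Kmul \<alpha> x y = (fst x * fst y + \<alpha> * snd x * snd y, fst x * snd y + snd x * fst y)"

definition Kdet :: "'a::field \<Rightarrow> 'a \<times> 'a \<Rightarrow> 'a \<times> 'a \<Rightarrow> 'a \<times> 'a \<Rightarrow> 'a \<times> 'a \<Rightarrow> 'a \<times> 'a" where
  "Kdet \<alpha> a b c d = (fst (Kmul \<alpha> a d) - fst (Kmul \<alpha> b c), snd (Kmul \<alpha> a d) - snd (Kmul \<alpha> b c))"

(* the embedding of GL(2,K) into GL(4,k) *)
definition embH :: "'a::field \<Rightarrow> 'a \<times> 'a \<Rightarrow> 'a \<times> 'a \<Rightarrow> 'a \<times> 'a \<Rightarrow> 'a \<times> 'a \<Rightarrow> 'a mat" where
  "embH \<alpha> a b c d = mat_of_rows_list 4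
     [[fst a, snd a * \<alpha>, fst b, snd b],
      [snd a, fst a, snd b, fst b / \<alpha>],
      [fst c, snd c * \<alpha>, fst d, snd d],
      [snd c * \<alpha>, fst c * \<alpha>, snd d * \<alpha>, fst d]]"

(* H = {g in GL(2,K) | det g in k^x}, embedded in G *)
definition Hgrp :: "'a::field \<Rightarrow> 'a mat set" where
  "Hgrp \<alpha> = {embH \<alpha> a b c d | a b c d.
               snd (Kdet \<alpha> a b c d) = 0 \<and> fst (Kdet \<alpha> a b c d) \<noteq> 0}"

definition setmult :: "'a::field mat set \<Rightarrow> 'a mat set \<Rightarrow> 'a mat set" where
  "setmult A B = {x * y | x y. x \<in> A \<and> y \<in> B}"

end

theory Submission
  imports Defs
begin


lemma less4: "(i::nat) < 4 \<Longrightarrow> i = 0 \<or> i = 1 \<or> i = 2 \<or> i = 3" by auto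

lemma mult4: assumes "A \<in> carrier_mat 4 4" "B \<in> carrier_mat 4 4" "i < 4" "j < 4"
  shows "(A*B)$$(i,j) = A$$(i,0)*B$$(0,j) + A$$(i,1)*B$$(1,j)+A$$(i,2)*B$$(2,j)+A$$(i,3)*B$$(3,j)"
  using assms by (simp add: scalar_prod_def numeral_eq_Suc)

lemma multv4: assumes "A \<in> carrier_mat 4 4" "v \<in> carrier_vec 4" "i < 4"
  shows "(A *\<^sub>v v) $ i = A$$(i,0)*v$0 + A$$(i,1)*v$1 + A$$(i,2)*v$2 + A$$(i,3)*v$3"
  using assms by (simp add: scalar_prod_def numeral_eq_Suc)

lemma mat4_eqI: assumes "A \<in> carrier_mat 4 4" "B \<in> carrier_mat 4 4"
  "\<And>i j. i \<in> {0,1,2,3} \<Longrightarrow> j \<in> {0,1,2,3} \<Longrightarrow> A$$(i,j) = B$$(i,j)"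
  shows "A = B"
proof (rule eq_matI)
  fix i j assume "i < dim_row B" "j < dim_col B"
  then have "i < 4" "j < 4" using assms by auto
  then have "i \<in> {0,1,2,3}" "j \<in> {0,1,2,3}" by auto
  then show "A$$(i,j) = B$$(i,j)" by (rule assms(3))
qed (use assms(1,2) in auto)

lemma mrl_carrier: "length rs = 4 \<Longrightarrow> mat_of_rows_list 4 rs \<in> carrier_mat 4 4"
  by (simp add: mat_of_rows_list_def)

lemma mrl_idx: "i < length rs \<Longrightarrow> j < 4 \<Longrightarrow> mat_of_rows_list 4 rs $$ (i,j) = rs ! i ! j"
  by (simp add: mat_of_rows_list_def)

lemma J_carrier[simp]: "Jmat \<in> carrier_mat 4 4"
  unfolding Jmat_def by (rule mrl_carrier) simp

lemma J_idx: "i < 4 \<Longrightarrow> j < 4 \<Longrightarrow> (Jmat::'a::field mat) $$ (i,j) =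
   [[0,0,1,0],[0,0,0,1],[-1,0,0,0],[0,-1,0,0]] ! i ! j"
  unfolding Jmat_def by (subst mrl_idx) auto

lemma J00: "(Jmat::'a::field mat) $$ (0,0) = 0" and J01: "(Jmat::'a::field mat) $$ (0,1) = 0"
  and J02: "(Jmat::'a::field mat) $$ (0,2) = 1" and J03: "(Jmat::'a::field mat) $$ (0,3) = 0"
  and J10: "(Jmat::'a::field mat) $$ (1,0) = 0" and J11: "(Jmat::'a::field mat) $$ (1,1) = 0"
  and J12: "(Jmat::'a::field mat) $$ (1,2) = 0" and J13: "(Jmat::'a::field mat) $$ (1,3) = 1"
  and J20: "(Jmat::'a::field mat) $$ (2,0) = -1" and J21: "(Jmat::'a::field mat) $$ (2,1) = 0"
  and J22: "(Jmat::'a::field mat) $$ (2,2) = 0" and J23: "(Jmat::'a::field mat) $$ (2,3) = 0"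
  and J30: "(Jmat::'a::field mat) $$ (3,0) = 0" and J31: "(Jmat::'a::field mat) $$ (3,1) = -1"
  and J32: "(Jmat::'a::field mat) $$ (3,2) = 0" and J33: "(Jmat::'a::field mat) $$ (3,3) = 0"
  by (simp_all add: J_idx)

lemmas Jent = J00 J01 J02 J03 J10 J11 J12 J13 J20 J21 J22 J23 J30 J31 J32 J33

lemma TJ_half: assumes g: "(g::'a::field mat) \<in> carrier_mat 4 4" and i: "i < 4"
  shows "(transpose_mat g * Jmat)$$(i,0) = - g$$(2,i)"
    "(transpose_mat g * Jmat)$$(i,1) = - g$$(3,i)"
    "(transpose_mat g * Jmat)$$(i,2) = g$$(0,i)"
    "(transpose_mat g * Jmat)$$(i,3) = g$$(1,i)"
proof -
  have t: "transpose_mat g \<in> carrier_mat 4 4" using g by simp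
  show "(transpose_mat g * Jmat)$$(i,0) = - g$$(2,i)"
    by (subst mult4[OF t J_carrier i], simp, simp only: Jent, use g i in simp)
  show "(transpose_mat g * Jmat)$$(i,1) = - g$$(3,i)"
    by (subst mult4[OF t J_carrier i], simp, simp only: Jent, use g i in simp)
  show "(transpose_mat g * Jmat)$$(i,2) = g$$(0,i)"
    by (subst mult4[OF t J_carrier i], simp, simp only: Jent, use g i in simp)
  show "(transpose_mat g * Jmat)$$(i,3) = g$$(1,i)"
    by (subst mult4[OF t J_carrier i], simp, simp only: Jent, use g i in simp)
qed

lemma TJ_entry: assumes g: "(g::'a::field mat) \<in> carrier_mat 4 4" and i: "i < 4" and j: "j < 4"
  shows "(transpose_mat g * Jmat * g)$$(i,j) =
     g$$(0,i)*g$$(2,j) + g$$(1,i)*g$$(3,j) - g$$(2,i)*g$$(0,j) - g$$(3,i)*g$$(1,j)"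
proof -
  have c: "transpose_mat g * Jmat \<in> carrier_mat 4 4" using g by simp
  show ?thesis
    unfolding mult4[OF c g i j] TJ_half[OF g i] by (simp add: algebra_simps)
qed

lemma GSp4_mult: assumes A: "A \<in> GSp4" and B: "B \<in> GSp4" shows "A * B \<in> GSp4"
proof -
  from A obtain l where Ac: "A \<in> carrier_mat 4 4" and dA: "det A \<noteq> 0" and l: "l \<noteq> 0"
    and lA: "transpose_mat A * Jmat * A = l \<cdot>\<^sub>m Jmat" unfolding GSp4_def by auto
  from B obtain m where Bc: "B \<in> carrier_mat 4 4" and dB: "det B \<noteq> 0" and m: "m \<noteq> 0"
    and mB: "transpose_mat B * Jmat * B = m \<cdot>\<^sub>m Jmat" unfolding GSp4_def by auto
  have tA: "transpose_mat A \<in> carrier_mat 4 4" and tB: "transpose_mat B \<in> carrier_mat 4 4"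
    using Ac Bc by auto
  have "transpose_mat (A*B) * Jmat * (A*B) = transpose_mat B * (transpose_mat A * Jmat * A) * B"
  proof -
    have tAJ: "transpose_mat A * Jmat \<in> carrier_mat 4 4" using tA by simp
    have tAJA: "transpose_mat A * Jmat * A \<in> carrier_mat 4 4" using mult_carrier_mat[OF tAJ Ac] .
    have AB: "A * B \<in> carrier_mat 4 4" using Ac Bc by simp
    have "transpose_mat (A*B) * Jmat * (A*B) = ((transpose_mat B * transpose_mat A) * Jmat) * (A*B)"
      by (simp only: transpose_mult[OF Ac Bc])
    also have "\<dots> = (transpose_mat B * (transpose_mat A * Jmat)) * (A*B)"
      by (simp only: assoc_mult_mat[OF tB tA J_carrier])
    also have "\<dots> = transpose_mat B * ((transpose_mat A * Jmat) * (A*B))"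
      by (rule assoc_mult_mat[OF tB tAJ AB])
    also have "(transpose_mat A * Jmat) * (A*B) = (transpose_mat A * Jmat * A) * B"
      by (rule assoc_mult_mat[OF tAJ Ac Bc, symmetric])
    also have "transpose_mat B * ((transpose_mat A * Jmat * A) * B) = transpose_mat B * (transpose_mat A * Jmat * A) * B"
      by (rule assoc_mult_mat[OF tB tAJA Bc, symmetric])
    finally show ?thesis .
  qed
  also have "\<dots> = transpose_mat B * (l \<cdot>\<^sub>m Jmat) * B" by (simp add: lA)
  also have "\<dots> = l \<cdot>\<^sub>m (transpose_mat B * Jmat * B)"
    using mult_smult_distrib[OF tB J_carrier] mult_smult_assoc_mat[OF mult_carrier_mat[OF tB J_carrier] Bc] by simp
  also have "\<dots> = (l * m) \<cdot>\<^sub>m Jmat" by (simp add: mB, intro eq_matI, auto)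
  finally have "transpose_mat (A*B) * Jmat * (A*B) = (l * m) \<cdot>\<^sub>m Jmat" .
  moreover have "det (A*B) \<noteq> 0" using det_mult[OF Ac Bc] dA dB by simp
  moreover have "A * B \<in> carrier_mat 4 4" using Ac Bc by auto
  ultimately show ?thesis unfolding GSp4_def using l m by (auto intro!: exI[of _ "l*m"])
qed



lemma embH_carrier[simp]: "embH \<alpha> a b c d \<in> carrier_mat 4 4"
  unfolding embH_def by (rule mrl_carrier) simp

lemma embH_dims[simp]: "dim_row (embH \<alpha> a b c d) = 4" "dim_col (embH \<alpha> a b c d) = 4"
  unfolding embH_def mat_of_rows_list_def by auto

lemma embH_idx: "i < 4 \<Longrightarrow> j < 4 \<Longrightarrow> embH \<alpha> a b c d $$ (i,j) =
     [[fst a, snd a * \<alpha>, fst b, snd b],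
      [snd a, fst a, snd b, fst b / \<alpha>],
      [fst c, snd c * \<alpha>, fst d, snd d],
      [snd c * \<alpha>, fst c * \<alpha>, snd d * \<alpha>, fst d]] ! i ! j"
  unfolding embH_def by (subst mrl_idx) auto

lemma mrl_dims[simp]: "dim_row (mat_of_rows_list n rs) = length rs" "dim_col (mat_of_rows_list n rs) = n"
  unfolding mat_of_rows_list_def by auto

lemma J_dims[simp]: "dim_row (Jmat::'a::field mat) = 4" "dim_col (Jmat::'a::field mat) = 4"
  using carrier_matD[OF J_carrier[where 'a='a]] by auto

lemma TJc: "g \<in> carrier_mat 4 4 \<Longrightarrow> transpose_mat g * Jmat * g \<in> carrier_mat 4 4"
  by (rule mult_carrier_mat[OF mult_carrier_mat[OF _ J_carrier]]) auto

lemma mc4: "A \<in> carrier_mat 4 4 \<Longrightarrow> B \<in> carrier_mat 4 4 \<Longrightarrow> A * B \<in> carrier_mat 4 4"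
  by (rule mult_carrier_mat)

definition Ksc :: "'a::field \<Rightarrow> 'a \<times> 'a \<Rightarrow> 'a \<times> 'a" where
  "Ksc t x = (t * fst x, t * snd x)"

lemma embH_TJ0:
  fixes \<alpha> :: "'a::field"
  assumes al: "\<alpha> \<noteq> 0"
  shows "transpose_mat (embH \<alpha> a b c d) * Jmat * embH \<alpha> a b c d =
    mat_of_rows_list 4 [[0,0,fst (Kdet \<alpha> a b c d),snd (Kdet \<alpha> a b c d)],
       [0,0,\<alpha> * snd (Kdet \<alpha> a b c d),fst (Kdet \<alpha> a b c d)],
       [-fst (Kdet \<alpha> a b c d), -(\<alpha> * snd (Kdet \<alpha> a b c d)),0,0],
       [-snd (Kdet \<alpha> a b c d), -fst (Kdet \<alpha> a b c d),0,0]]"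
  apply (rule mat4_eqI)
    apply (simp add: TJc)
   apply (rule mrl_carrier, simp)
  using al by (auto simp: TJ_entry embH_idx mrl_idx Kdet_def Kmul_def field_simps simp del: index_mult_mat)

lemma embH_TJ:
  fixes \<alpha> :: "'a::field"
  assumes al: "\<alpha> \<noteq> 0" and h: "snd (Kdet \<alpha> a b c d) = 0"
  shows "transpose_mat (embH \<alpha> a b c d) * Jmat * embH \<alpha> a b c d = fst (Kdet \<alpha> a b c d) \<cdot>\<^sub>m Jmat"
  unfolding embH_TJ0[OF al] h
  apply (rule mat4_eqI)
    apply (rule mrl_carrier, simp)
   apply simp
  by (auto simp: mrl_idx J_idx)

definition Kneg :: "'a::field \<times> 'a \<Rightarrow> 'a \<times> 'a" where
  "Kneg x = (- fst x, - snd x)"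

lemma embH_adj:
  fixes \<alpha> :: "'a::field"
  assumes al: "\<alpha> \<noteq> 0"
  shows "embH \<alpha> a b c d * embH \<alpha> d (Kneg b) (Kneg c) a =
    mat_of_rows_list 4 [[fst (Kdet \<alpha> a b c d), \<alpha> * snd (Kdet \<alpha> a b c d), 0, 0],
       [snd (Kdet \<alpha> a b c d), fst (Kdet \<alpha> a b c d), 0, 0],
       [0, 0, fst (Kdet \<alpha> a b c d), snd (Kdet \<alpha> a b c d)],
       [0, 0, \<alpha> * snd (Kdet \<alpha> a b c d), fst (Kdet \<alpha> a b c d)]]"
  apply (rule mat4_eqI)
    apply (simp add: mc4)
   apply (rule mrl_carrier, simp)
  using al by (auto simp: mult4 embH_idx mrl_idx Kdet_def Kmul_def Kneg_def field_simps simp del: index_mult_mat)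

lemma embH_Ksc: "embH \<alpha> (Ksc t a) (Ksc t b) (Ksc t c) (Ksc t d) = t \<cdot>\<^sub>m embH \<alpha> a b c d"
  apply (rule mat4_eqI)
    apply simp
   apply simp
  by (auto simp: embH_idx Ksc_def)

definition Hinv :: "'a::field \<Rightarrow> 'a \<times> 'a \<Rightarrow> 'a \<times> 'a \<Rightarrow> 'a \<times> 'a \<Rightarrow> 'a \<times> 'a \<Rightarrow> 'a mat" where
  "Hinv \<alpha> a b c d = embH \<alpha> (Ksc (1 / fst (Kdet \<alpha> a b c d)) d) (Ksc (1 / fst (Kdet \<alpha> a b c d)) (Kneg b))
     (Ksc (1 / fst (Kdet \<alpha> a b c d)) (Kneg c)) (Ksc (1 / fst (Kdet \<alpha> a b c d)) a)"

lemma embH_inv: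
  fixes \<alpha> :: "'a::field"
  assumes al: "\<alpha> \<noteq> 0" and h: "snd (Kdet \<alpha> a b c d) = 0" and n: "fst (Kdet \<alpha> a b c d) \<noteq> 0"
  shows "embH \<alpha> a b c d * Hinv \<alpha> a b c d = 1\<^sub>m 4"
proof -
  have "embH \<alpha> a b c d * Hinv \<alpha> a b c d =
     (1 / fst (Kdet \<alpha> a b c d)) \<cdot>\<^sub>m (embH \<alpha> a b c d * embH \<alpha> d (Kneg b) (Kneg c) a)"
    unfolding Hinv_def embH_Ksc by (rule mult_smult_distrib[OF embH_carrier embH_carrier])
  also have "\<dots> = 1\<^sub>m 4"
    unfolding embH_adj[OF al] h
    apply (rule mat4_eqI)
      apply (simp add: mrl_carrier)
     apply simp
    using n by (auto simp: mrl_idx)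
  finally show ?thesis .
qed

lemma Hinv_H:
  fixes \<alpha> :: "'a::field"
  assumes al: "\<alpha> \<noteq> 0" and h: "snd (Kdet \<alpha> a b c d) = 0" and n: "fst (Kdet \<alpha> a b c d) \<noteq> 0"
  shows "Hinv \<alpha> a b c d \<in> Hgrp \<alpha>"
proof -
  define D where "D = fst (Kdet \<alpha> a b c d)"
  have D: "D = fst a * fst d + \<alpha> * snd a * snd d - fst b * fst c - \<alpha> * snd b * snd c"
    unfolding D_def by (simp add: Kdet_def Kmul_def)
  have h': "fst a * snd d + snd a * fst d - fst b * snd c - snd b * fst c = 0"
    using h by (simp add: Kdet_def Kmul_def)
  have nD: "D \<noteq> 0" using n D_def by simp
  have e1: "snd (Kdet \<alpha> (Ksc (1 / D) d) (Ksc (1 / D) (Kneg b)) (Ksc (1 / D) (Kneg c)) (Ksc (1 / D) a))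
     = (fst a * snd d + snd a * fst d - fst b * snd c - snd b * fst c) / (D * D)"
    using nD by (simp add: Kdet_def Kmul_def Ksc_def Kneg_def field_simps)
  have e2: "fst (Kdet \<alpha> (Ksc (1 / D) d) (Ksc (1 / D) (Kneg b)) (Ksc (1 / D) (Kneg c)) (Ksc (1 / D) a))
     = (fst a * fst d + \<alpha> * snd a * snd d - fst b * fst c - \<alpha> * snd b * snd c) / (D * D)"
    using nD by (simp add: Kdet_def Kmul_def Ksc_def Kneg_def field_simps)
  let ?K = "Kdet \<alpha> (Ksc (1 / D) d) (Ksc (1 / D) (Kneg b)) (Ksc (1 / D) (Kneg c)) (Ksc (1 / D) a)"
  have s: "snd ?K = 0" using e1 h' by simp
  have f: "fst ?K \<noteq> 0" using e2 D[symmetric] nD by simp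
  show ?thesis unfolding Hgrp_def Hinv_def D_def[symmetric] using s f by blast
qed

lemma embH_det: 
  fixes \<alpha> :: "'a::field"
  assumes al: "\<alpha> \<noteq> 0" and h: "snd (Kdet \<alpha> a b c d) = 0" and n: "fst (Kdet \<alpha> a b c d) \<noteq> 0"
  shows "det (embH \<alpha> a b c d) \<noteq> 0"
proof -
  have "det (embH \<alpha> a b c d) * det (Hinv \<alpha> a b c d) = det (embH \<alpha> a b c d * Hinv \<alpha> a b c d)"
    unfolding Hinv_def by (rule det_mult[OF embH_carrier embH_carrier, symmetric])
  then have "det (embH \<alpha> a b c d) * det (Hinv \<alpha> a b c d) = 1"
    using embH_inv[OF al h n] by simp
  then show ?thesis by auto
qed

lemma H_GSp4:
  fixes \<alpha> :: "'a::field"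
  assumes al: "\<alpha> \<noteq> 0" and x: "x \<in> Hgrp \<alpha>"
  shows "x \<in> GSp4"
proof -
  from x obtain a b c d where x: "x = embH \<alpha> a b c d" and h: "snd (Kdet \<alpha> a b c d) = 0"
    and n: "fst (Kdet \<alpha> a b c d) \<noteq> 0" unfolding Hgrp_def by auto
  show ?thesis unfolding GSp4_def x
    using embH_det[OF al h n] embH_TJ[OF al h] n by auto
qed



definition s2inv :: "'a::field mat" where
  "s2inv = mat_of_rows_list 4 [[1,0,0,0],[0,0,0,-1],[0,0,1,0],[0,1,0,0]]"

lemma s2_carrier[simp]: "(s2::'a::field mat) \<in> carrier_mat 4 4"
  unfolding s2_def by (rule mrl_carrier) simp

lemma s2inv_carrier[simp]: "(s2inv::'a::field mat) \<in> carrier_mat 4 4"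
  unfolding s2inv_def by (rule mrl_carrier) simp

lemma s2_idx: "i < 4 \<Longrightarrow> j < 4 \<Longrightarrow> (s2::'a::field mat) $$ (i,j) =
   [[1,0,0,0],[0,0,0,1],[0,0,1,0],[0,-1,0,0]] ! i ! j"
  unfolding s2_def by (subst mrl_idx) auto

lemma s2inv_idx: "i < 4 \<Longrightarrow> j < 4 \<Longrightarrow> (s2inv::'a::field mat) $$ (i,j) =
   [[1,0,0,0],[0,0,0,-1],[0,0,1,0],[0,1,0,0]] ! i ! j"
  unfolding s2inv_def by (subst mrl_idx) auto

lemma s2inv_s2: "(s2inv::'a::field mat) * s2 = 1\<^sub>m 4"
  apply (rule mat4_eqI)
    apply (simp add: mc4)
   apply simp
  by (auto simp: mult4 s2_idx s2inv_idx simp del: index_mult_mat)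

lemma s2_s2inv: "(s2::'a::field mat) * s2inv = 1\<^sub>m 4"
  apply (rule mat4_eqI)
    apply (simp add: mc4)
   apply simp
  by (auto simp: mult4 s2_idx s2inv_idx simp del: index_mult_mat)

lemma GSp4I: assumes g: "(g::'a::field mat) \<in> carrier_mat 4 4" and h: "g * h = 1\<^sub>m 4"
  and hc: "h \<in> carrier_mat 4 4"
  and l: "l \<noteq> 0" and e: "\<And>i j. i \<in> {0,1,2,3} \<Longrightarrow> j \<in> {0,1,2,3} \<Longrightarrow>
     g$$(0,i)*g$$(2,j) + g$$(1,i)*g$$(3,j) - g$$(2,i)*g$$(0,j) - g$$(3,i)*g$$(1,j) = l * Jmat $$ (i,j)"
  shows "g \<in> GSp4"
proof -
  have "det g * det h = 1" using det_mult[OF g hc] h by simp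
  then have d: "det g \<noteq> 0" by auto
  have "transpose_mat g * Jmat * g = l \<cdot>\<^sub>m Jmat"
    apply (rule mat4_eqI)
      apply (simp add: TJc g)
     apply simp
    subgoal for i j
      using e[of i j] TJ_entry[OF g, of i j] by auto
    done
  then show ?thesis unfolding GSp4_def using g d l by auto
qed

lemma s2_GSp4: "(s2::'a::field mat) \<in> GSp4"
  by (rule GSp4I[OF s2_carrier s2_s2inv s2inv_carrier, of 1]) (auto simp: s2_idx J_idx)

lemma s2inv_GSp4: "(s2inv::'a::field mat) \<in> GSp4"
  by (rule GSp4I[OF s2inv_carrier s2inv_s2 s2_carrier, of 1]) (auto simp: s2inv_idx J_idx)

lemma GSp4_E: assumes "(g::'a::field mat) \<in> GSp4"
  obtains l where "g \<in> carrier_mat 4 4" "det g \<noteq> 0" "l \<noteq> 0"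
    "\<And>i j. i < 4 \<Longrightarrow> j < 4 \<Longrightarrow>
     g$$(0,i)*g$$(2,j) + g$$(1,i)*g$$(3,j) - g$$(2,i)*g$$(0,j) - g$$(3,i)*g$$(1,j) = l * Jmat $$ (i,j)"
    "transpose_mat g * Jmat * g = l \<cdot>\<^sub>m Jmat"
proof -
  from assms obtain l where g: "g \<in> carrier_mat 4 4" and d: "det g \<noteq> 0" and l: "l \<noteq> 0"
    and e: "transpose_mat g * Jmat * g = l \<cdot>\<^sub>m Jmat" unfolding GSp4_def by auto
  have "\<And>i j. i < 4 \<Longrightarrow> j < 4 \<Longrightarrow>
     g$$(0,i)*g$$(2,j) + g$$(1,i)*g$$(3,j) - g$$(2,i)*g$$(0,j) - g$$(3,i)*g$$(1,j) = l * Jmat $$ (i,j)"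
  proof -
    fix i j :: nat assume i: "i < 4" and j: "j < 4"
    have "(transpose_mat g * Jmat * g) $$ (i,j) = (l \<cdot>\<^sub>m Jmat) $$ (i,j)" using e by simp
    then show "g$$(0,i)*g$$(2,j) + g$$(1,i)*g$$(3,j) - g$$(2,i)*g$$(0,j) - g$$(3,i)*g$$(1,j) = l * Jmat $$ (i,j)"
      using TJ_entry[OF g i j] i j by simp
  qed
  then show ?thesis using that g d l e by blast
qed

lemma block_det:
  assumes "(g::'a::field mat) \<in> GSp4" and z: "g$$(2,0) = 0" "g$$(3,0) = 0" "g$$(2,1) = 0" "g$$(3,1) = 0"
  shows "g$$(0,0)*g$$(1,1) - g$$(0,1)*g$$(1,0) \<noteq> 0" "g$$(2,2)*g$$(3,3) - g$$(2,3)*g$$(3,2) \<noteq> 0"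
proof -
  obtain l where l: "l \<noteq> 0" and e: "\<And>i j. i < 4 \<Longrightarrow> j < 4 \<Longrightarrow>
     g$$(0,i)*g$$(2,j) + g$$(1,i)*g$$(3,j) - g$$(2,i)*g$$(0,j) - g$$(3,i)*g$$(1,j) = l * Jmat $$ (i,j)"
    using GSp4_E[OF assms(1)] by metis
  have e02: "g$$(0,0)*g$$(2,2) + g$$(1,0)*g$$(3,2) = l" using e[of 0 2] z by (simp add: J_idx)
  have e03: "g$$(0,0)*g$$(2,3) + g$$(1,0)*g$$(3,3) = 0" using e[of 0 3] z by (simp add: J_idx)
  have e12: "g$$(0,1)*g$$(2,2) + g$$(1,1)*g$$(3,2) = 0" using e[of 1 2] z by (simp add: J_idx)
  have e13: "g$$(0,1)*g$$(2,3) + g$$(1,1)*g$$(3,3) = l" using e[of 1 3] z by (simp add: J_idx)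
  have "(g$$(0,0)*g$$(1,1) - g$$(0,1)*g$$(1,0)) * (g$$(2,2)*g$$(3,3) - g$$(2,3)*g$$(3,2))
     = (g$$(0,0)*g$$(2,2) + g$$(1,0)*g$$(3,2)) * (g$$(0,1)*g$$(2,3) + g$$(1,1)*g$$(3,3))
     - (g$$(0,0)*g$$(2,3) + g$$(1,0)*g$$(3,3)) * (g$$(0,1)*g$$(2,2) + g$$(1,1)*g$$(3,2))"
    by (simp add: algebra_simps)
  also have "\<dots> = l * l" using e02 e03 e12 e13 by simp
  finally have "(g$$(0,0)*g$$(1,1) - g$$(0,1)*g$$(1,0)) * (g$$(2,2)*g$$(3,3) - g$$(2,3)*g$$(3,2)) \<noteq> 0"
    using l by simp
  then show "g$$(0,0)*g$$(1,1) - g$$(0,1)*g$$(1,0) \<noteq> 0" "g$$(2,2)*g$$(3,3) - g$$(2,3)*g$$(3,2) \<noteq> 0"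
    by auto
qed

lemma P_intro:
  assumes G: "(g::'a::field mat) \<in> GSp4" and z: "g$$(2,0) = 0" "g$$(3,0) = 0" "g$$(2,1) = 0" "g$$(3,1) = 0"
  shows "g \<in> SiegelP"
proof -
  have g: "g \<in> carrier_mat 4 4" using G unfolding GSp4_def by auto
  note dA = block_det(1)[OF G z]
  define dd where "dd = g$$(0,0)*g$$(1,1) - g$$(0,1)*g$$(1,0)"
  have dd: "dd \<noteq> 0" using dA dd_def by simp
  have "(\<lambda>v. g *\<^sub>v v) ` L0 = L0"
  proof
    show "(\<lambda>v. g *\<^sub>v v) ` L0 \<subseteq> L0"
    proof
      fix u assume "u \<in> (\<lambda>v. g *\<^sub>v v) ` L0"
      then obtain v where v: "v \<in> L0" and u: "u = g *\<^sub>v v" by auto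
      from v have vc: "v \<in> carrier_vec 4" "v $ 2 = 0" "v $ 3 = 0" unfolding L0_def by auto
      show "u \<in> L0" unfolding L0_def u
        using g vc z by (simp add: multv4 del: index_mult_mat_vec)
    qed
  next
    show "L0 \<subseteq> (\<lambda>v. g *\<^sub>v v) ` L0"
    proof
      fix u assume "u \<in> (L0::'a vec set)"
      then have uc: "u \<in> carrier_vec 4" "u $ 2 = 0" "u $ 3 = 0" unfolding L0_def by auto
      define v where "v = vec 4 (\<lambda>i. if i = 0 then (g$$(1,1) * u$0 - g$$(0,1) * u$1) / dd
         else if i = 1 then (g$$(0,0) * u$1 - g$$(1,0) * u$0) / dd else 0)"
      have vc: "v \<in> carrier_vec 4" "v $ 0 = (g$$(1,1) * u$0 - g$$(0,1) * u$1) / dd"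
        "v $ 1 = (g$$(0,0) * u$1 - g$$(1,0) * u$0) / dd" "v $ 2 = 0" "v $ 3 = 0"
        unfolding v_def by auto
      have "g *\<^sub>v v = u"
      proof (rule eq_vecI)
        show "dim_vec (g *\<^sub>v v) = dim_vec u" using g uc by simp
        fix i assume "i < dim_vec u"
        then have i: "i < 4" using uc by simp
        have m: "(g *\<^sub>v v) $ i = g$$(i,0) * v$0 + g$$(i,1) * v$1"
          using multv4[OF g vc(1) i] vc by simp
        have "i = 0 \<or> i = 1 \<or> i = 2 \<or> i = 3" using i by auto
        moreover have "g$$(0,0) * v$0 + g$$(0,1) * v$1 = u$0"
        proof -
          have "g$$(0,0) * v$0 + g$$(0,1) * v$1 = (g$$(0,0) * (g$$(1,1) * u$0 - g$$(0,1) * u$1)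
             + g$$(0,1) * (g$$(0,0) * u$1 - g$$(1,0) * u$0)) / dd"
            unfolding vc(2) vc(3) using dd by (simp add: field_simps)
          also have "\<dots> = (dd * u$0) / dd" unfolding dd_def by (simp add: algebra_simps)
          finally show ?thesis using dd by simp
        qed
        moreover have "g$$(1,0) * v$0 + g$$(1,1) * v$1 = u$1"
        proof -
          have "g$$(1,0) * v$0 + g$$(1,1) * v$1 = (g$$(1,0) * (g$$(1,1) * u$0 - g$$(0,1) * u$1)
             + g$$(1,1) * (g$$(0,0) * u$1 - g$$(1,0) * u$0)) / dd"
            unfolding vc(2) vc(3) using dd by (simp add: field_simps)
          also have "\<dots> = (dd * u$1) / dd" unfolding dd_def by (simp add: algebra_simps)
          finally show ?thesis using dd by simp
        qed
        ultimately show "(g *\<^sub>v v) $ i = u $ i" using m z uc by auto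
      qed
      moreover have "v \<in> L0" unfolding L0_def using vc by auto
      ultimately show "u \<in> (\<lambda>v. g *\<^sub>v v) ` L0" by force
    qed
  qed
  then show ?thesis unfolding SiegelP_def using G by auto
qed

lemma P_dest:
  assumes P: "(g::'a::field mat) \<in> SiegelP"
  shows "g$$(2,0) = 0" "g$$(3,0) = 0" "g$$(2,1) = 0" "g$$(3,1) = 0"
    "g$$(2,2)*g$$(3,3) - g$$(2,3)*g$$(3,2) \<noteq> 0" "g \<in> GSp4"
proof -
  have G: "g \<in> GSp4" and im: "(\<lambda>v. g *\<^sub>v v) ` L0 = L0" using P unfolding SiegelP_def by auto
  have g: "g \<in> carrier_mat 4 4" using G unfolding GSp4_def by auto
  have u0: "unit_vec 4 0 \<in> (L0::'a vec set)" "unit_vec 4 1 \<in> (L0::'a vec set)" unfolding L0_def by auto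
  have "g *\<^sub>v unit_vec 4 0 \<in> L0" "g *\<^sub>v unit_vec 4 1 \<in> L0" using im u0 by blast+
  then have "(g *\<^sub>v unit_vec 4 0) $ 2 = 0" "(g *\<^sub>v unit_vec 4 0) $ 3 = 0"
     "(g *\<^sub>v unit_vec 4 1) $ 2 = 0" "(g *\<^sub>v unit_vec 4 1) $ 3 = 0"
    unfolding L0_def by auto
  then show z: "g$$(2,0) = 0" "g$$(3,0) = 0" "g$$(2,1) = 0" "g$$(3,1) = 0"
    using g by (simp_all add: multv4 del: index_mult_mat_vec)
  show "g$$(2,2)*g$$(3,3) - g$$(2,3)*g$$(3,2) \<noteq> 0" by (rule block_det(2)[OF G z])
  show "g \<in> GSp4" by (rule G)
qed

lemma Q_intro:
  assumes G: "(g::'a::field mat) \<in> GSp4" and z: "g$$(0,0) = 1" "g$$(1,0) = 0" "g$$(2,0) = 0" "g$$(3,0) = 0"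
  shows "g \<in> KlingenQ"
proof -
  have g: "g \<in> carrier_mat 4 4" using G unfolding GSp4_def by auto
  have e: "g *\<^sub>v unit_vec 4 0 = unit_vec 4 0"
  proof (rule eq_vecI)
    show "dim_vec (g *\<^sub>v unit_vec 4 0) = dim_vec (unit_vec 4 (0::nat) :: 'a vec)" using g by simp
    fix i assume "i < dim_vec (unit_vec 4 (0::nat) :: 'a vec)"
    then have "i = 0 \<or> i = 1 \<or> i = 2 \<or> i = 3" by auto
    then show "(g *\<^sub>v unit_vec 4 0) $ i = unit_vec 4 0 $ i"
      using g z by (auto simp: multv4 simp del: index_mult_mat_vec)
  qed
  have m: "\<And>c. g *\<^sub>v (c \<cdot>\<^sub>v unit_vec 4 0) = c \<cdot>\<^sub>v unit_vec 4 0"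
    using mult_mat_vec[OF g unit_vec_carrier] e by simp
  have "(\<lambda>v. g *\<^sub>v v) ` line_e1 = line_e1"
  proof
    show "(\<lambda>v. g *\<^sub>v v) ` line_e1 \<subseteq> line_e1" unfolding line_e1_def using m by auto
    show "line_e1 \<subseteq> (\<lambda>v. g *\<^sub>v v) ` line_e1"
    proof
      fix x assume "x \<in> (line_e1 :: 'a vec set)"
      then obtain c where x: "x = c \<cdot>\<^sub>v unit_vec 4 0" unfolding line_e1_def by auto
      have "x = g *\<^sub>v (c \<cdot>\<^sub>v unit_vec 4 0)" using m x by simp
      moreover have "c \<cdot>\<^sub>v unit_vec 4 0 \<in> line_e1" unfolding line_e1_def by auto
      ultimately show "x \<in> (\<lambda>v. g *\<^sub>v v) ` line_e1" by blast
    qed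
  qed
  then show ?thesis unfolding KlingenQ_def using G by auto
qed



definition Dl :: "'a::field \<Rightarrow> 'a mat \<Rightarrow> 'a" where
  "Dl \<alpha> x = - x$$(2,2)*x$$(3,1) - \<alpha>*x$$(2,3)*x$$(3,0) + \<alpha>*x$$(3,3)*x$$(2,0) + x$$(3,2)*x$$(2,1)"

lemma Dl_H0:
  fixes \<alpha> :: "'a::field"
  assumes x: "x \<in> carrier_mat 4 4" and al: "\<alpha> \<noteq> 0"
  shows "Dl \<alpha> (x * embH \<alpha> a b c d) = fst (Kdet \<alpha> a b c d) * Dl \<alpha> x
     + \<alpha> * snd (Kdet \<alpha> a b c d) * (x$$(2,0)*x$$(3,2) + x$$(2,1)*x$$(3,3) - x$$(2,2)*x$$(3,0) - x$$(2,3)*x$$(3,1))"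
  unfolding Dl_def
  using al by (simp add: mult4[OF x embH_carrier] embH_idx Kdet_def Kmul_def field_simps del: index_mult_mat)

lemma Dl_H:
  fixes \<alpha> :: "'a::field"
  assumes x: "x \<in> carrier_mat 4 4" and al: "\<alpha> \<noteq> 0" and h: "snd (Kdet \<alpha> a b c d) = 0"
  shows "Dl \<alpha> (x * embH \<alpha> a b c d) = fst (Kdet \<alpha> a b c d) * Dl \<alpha> x"
  using Dl_H0[OF x al] h by simp

lemma Dl_P:
  fixes \<alpha> :: "'a::field"
  assumes p: "p \<in> carrier_mat 4 4" and x: "x \<in> carrier_mat 4 4"
    and z: "p$$(2,0) = 0" "p$$(3,0) = 0" "p$$(2,1) = 0" "p$$(3,1) = 0"
  shows "Dl \<alpha> (p * x) = (p$$(2,2)*p$$(3,3) - p$$(2,3)*p$$(3,2)) * Dl \<alpha> x"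
  unfolding Dl_def using z
  by (simp add: mult4[OF p x] algebra_simps del: index_mult_mat)

lemma Dl_s2: "Dl \<alpha> (s2::'a::field mat) = 1"
  unfolding Dl_def by (simp add: s2_idx)

lemma Dl_P0:
  assumes z: "p$$(2,0) = 0" "p$$(3,0) = 0" "p$$(2,1) = 0" "p$$(3,1) = 0"
  shows "Dl \<alpha> (p::'a::field mat) = 0"
  unfolding Dl_def using z by simp

lemma nonsq:
  fixes \<alpha> x1 x2 :: "'a::field"
  assumes ns: "\<not> (\<exists>x::'a. x * x = \<alpha>)" and e: "x1 * x1 - \<alpha> * x2 * x2 = 0"
  shows "x1 = 0 \<and> x2 = 0"
proof (cases "x2 = 0")
  case True
  then show ?thesis using e by simp
next
  case False
  have "x1 * x1 = \<alpha> * x2 * x2" using e by simp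
  then have "(x1 / x2) * (x1 / x2) = \<alpha>" using False by (simp add: field_simps)
  then have False using ns by blast
  then show ?thesis ..
qed

lemma exist_bd:
  fixes \<alpha> :: "'a::field"
  assumes ns: "\<not> (\<exists>x::'a. x * x = \<alpha>)" and nz: "a \<noteq> (0,0) \<or> c \<noteq> (0,0)"
  shows "\<exists>b d. snd (Kdet \<alpha> a b c d) = 0 \<and> fst (Kdet \<alpha> a b c d) \<noteq> 0"
proof (cases "a = (0,0)")
  case False
  have "fst a * fst a - \<alpha> * snd a * snd a \<noteq> 0"
  proof
    assume "fst a * fst a - \<alpha> * snd a * snd a = 0"
    from nonsq[OF ns this] have "a = (0,0)" by (simp add: prod_eq_iff)
    with False show False by simp
  qed
  then have "snd (Kdet \<alpha> a (0,0) c (fst a, - snd a)) = 0 \<and> fst (Kdet \<alpha> a (0,0) c (fst a, - snd a)) \<noteq> 0"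
    by (simp add: Kdet_def Kmul_def algebra_simps)
  then show ?thesis by blast
next
  case True
  then have cn: "c \<noteq> (0,0)" using nz by simp
  have "fst c * fst c - \<alpha> * snd c * snd c \<noteq> 0"
  proof
    assume "fst c * fst c - \<alpha> * snd c * snd c = 0"
    from nonsq[OF ns this] have "c = (0,0)" by (simp add: prod_eq_iff)
    with cn show False by simp
  qed
  then have "snd (Kdet \<alpha> a (- fst c, snd c) c (0,0)) = 0 \<and> fst (Kdet \<alpha> a (- fst c, snd c) c (0,0)) \<noteq> 0"
    using True by (simp add: Kdet_def Kmul_def algebra_simps)
  then show ?thesis by blast
qed

lemma right_inv:
  assumes g: "(g::'a::field mat) \<in> carrier_mat 4 4" and d: "det g \<noteq> 0"
  shows "\<exists>m. m \<in> carrier_mat 4 4 \<and> g * m = 1\<^sub>m 4"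
proof -
  have "g \<in> Units (ring_mat TYPE('a) 4 undefined)" by (rule det_non_zero_imp_unit[OF g d])
  then show ?thesis unfolding Units_def ring_mat_simps by auto
qed

lemma rows_from_inv:
  fixes g :: "'a::field mat"
  assumes g: "g \<in> carrier_mat 4 4" and m: "m \<in> carrier_mat 4 4" and gm: "g * m = 1\<^sub>m 4"
    and e: "transpose_mat g * Jmat * g = l \<cdot>\<^sub>m Jmat"
  shows "g$$(2,0) = - l * m$$(2,0)" "g$$(2,1) = - l * m$$(3,0)" "g$$(2,2) = l * m$$(0,0)" "g$$(2,3) = l * m$$(1,0)"
    "g$$(3,0) = - l * m$$(2,1)" "g$$(3,1) = - l * m$$(3,1)" "g$$(3,2) = l * m$$(0,1)" "g$$(3,3) = l * m$$(1,1)"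
proof -
  have tg: "transpose_mat g \<in> carrier_mat 4 4" and tm: "transpose_mat m \<in> carrier_mat 4 4" using g m by auto
  have tgJ: "transpose_mat g * Jmat \<in> carrier_mat 4 4" using tg by (simp add: mc4)
  have "transpose_mat m * (transpose_mat g * Jmat * g) = ((transpose_mat m * transpose_mat g) * Jmat) * g"
    using assoc_mult_mat[OF tm tgJ g, symmetric] assoc_mult_mat[OF tm tg J_carrier, symmetric] by simp
  also have "transpose_mat m * transpose_mat g = 1\<^sub>m 4"
    using transpose_mult[OF g m, symmetric] gm by simp
  finally have L: "transpose_mat m * (transpose_mat g * Jmat * g) = Jmat * g"
    using left_mult_one_mat[OF J_carrier] by simp
  have "transpose_mat m * (transpose_mat g * Jmat * g) = l \<cdot>\<^sub>m (transpose_mat m * Jmat)"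
    unfolding e by (rule mult_smult_distrib[OF tm J_carrier])
  with L have JG: "Jmat * g = l \<cdot>\<^sub>m (transpose_mat m * Jmat)" by simp
  have r0: "\<And>j. j < 4 \<Longrightarrow> (Jmat * g)$$(0,j) = g$$(2,j)"
    using g by (simp add: mult4[OF J_carrier g] J_idx del: index_mult_mat)
  have r1: "\<And>j. j < 4 \<Longrightarrow> (Jmat * g)$$(1,j) = g$$(3,j)"
    using g by (simp add: mult4[OF J_carrier g] J_idx del: index_mult_mat)
  have s: "\<And>i j. i < 4 \<Longrightarrow> j < 4 \<Longrightarrow> (l \<cdot>\<^sub>m (transpose_mat m * Jmat))$$(i,j) = l * (transpose_mat m * Jmat)$$(i,j)"
    using m by simp
  note th = TJ_half[OF m]
  show "g$$(2,0) = - l * m$$(2,0)" using r0[of 0] JG s[of 0 0] th(1)[of 0] by simp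
  show "g$$(2,1) = - l * m$$(3,0)" using r0[of 1] JG s[of 0 1] th(2)[of 0] by simp
  show "g$$(2,2) = l * m$$(0,0)" using r0[of 2] JG s[of 0 2] th(3)[of 0] by simp
  show "g$$(2,3) = l * m$$(1,0)" using r0[of 3] JG s[of 0 3] th(4)[of 0] by simp
  show "g$$(3,0) = - l * m$$(2,1)" using r1[of 0] JG s[of 1 0] th(1)[of 1] by simp
  show "g$$(3,1) = - l * m$$(3,1)" using r1[of 1] JG s[of 1 1] th(2)[of 1] by simp
  show "g$$(3,2) = l * m$$(0,1)" using r1[of 2] JG s[of 1 2] th(3)[of 1] by simp
  show "g$$(3,3) = l * m$$(1,1)" using r1[of 3] JG s[of 1 3] th(4)[of 1] by simp
qed

lemma colm:
  assumes A: "A \<in> carrier_mat 4 4" and B: "B \<in> carrier_mat 4 4" and C: "C \<in> carrier_mat 4 4"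
    and j: "j < 4" and e: "B$$(0,j) = C$$(0,j)" "B$$(1,j) = C$$(1,j)" "B$$(2,j) = C$$(2,j)" "B$$(3,j) = C$$(3,j)"
    and i: "i < 4"
  shows "(A*B)$$(i,j) = (A*C)$$(i,j)"
  using mult4[OF A B i j] mult4[OF A C i j] e by simp



lemma Hinv_carrier[simp]: "Hinv \<alpha> a b c d \<in> carrier_mat 4 4"
  unfolding Hinv_def by simp

lemma embH_in_H: "snd (Kdet \<alpha> a b c d) = 0 \<Longrightarrow> fst (Kdet \<alpha> a b c d) \<noteq> 0 \<Longrightarrow> embH \<alpha> a b c d \<in> Hgrp \<alpha>"
  unfolding Hgrp_def by blast

lemma one_idx: "(g * m = 1\<^sub>m 4) \<Longrightarrow> i < 4 \<Longrightarrow> j < 4 \<Longrightarrow> (g * m) $$ (i,j) = (if i = j then 1 else 0)"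
  by simp

lemma constrA:
  fixes \<alpha> :: "'a::field"
  assumes al: "\<alpha> \<noteq> 0" and ns: "\<not> (\<exists>x::'a. x * x = \<alpha>)"
    and gc: "g \<in> carrier_mat 4 4" and mc: "m \<in> carrier_mat 4 4" and gm: "g * m = 1\<^sub>m 4"
  obtains b d where "snd (Kdet \<alpha> (m$$(0,0), m$$(1,0)) b (m$$(2,0), m$$(3,0) / \<alpha>) d) = 0"
    "fst (Kdet \<alpha> (m$$(0,0), m$$(1,0)) b (m$$(2,0), m$$(3,0) / \<alpha>) d) \<noteq> 0"
    "\<And>i. i < 4 \<Longrightarrow> (g * embH \<alpha> (m$$(0,0), m$$(1,0)) b (m$$(2,0), m$$(3,0) / \<alpha>) d)$$(i,0) = (g * m)$$(i,0)"
proof -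
  have nz: "(m$$(0,0), m$$(1,0)) \<noteq> (0,0) \<or> (m$$(2,0), m$$(3,0) / \<alpha>) \<noteq> (0,0)"
  proof (rule ccontr)
    assume "\<not> ?thesis"
    then have z: "m$$(0,0) = 0" "m$$(1,0) = 0" "m$$(2,0) = 0" "m$$(3,0) = 0" using al by auto
    have "(g * m)$$(0,0) = 0" using z by (simp add: mult4[OF gc mc] del: index_mult_mat)
    moreover have "(g * m)$$(0,0) = 1" using gm by simp
    ultimately show False by simp
  qed
  from exist_bd[OF ns nz] obtain b d where
    h: "snd (Kdet \<alpha> (m$$(0,0), m$$(1,0)) b (m$$(2,0), m$$(3,0) / \<alpha>) d) = 0"
    "fst (Kdet \<alpha> (m$$(0,0), m$$(1,0)) b (m$$(2,0), m$$(3,0) / \<alpha>) d) \<noteq> 0" by blast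
  have "\<And>i. i < 4 \<Longrightarrow> (g * embH \<alpha> (m$$(0,0), m$$(1,0)) b (m$$(2,0), m$$(3,0) / \<alpha>) d)$$(i,0) = (g * m)$$(i,0)"
    by (rule colm[OF gc embH_carrier mc]) (use al in \<open>simp_all add: embH_idx\<close>)
  then show ?thesis using that h by blast
qed

theorem lemma2p3:
  fixes \<alpha> :: "'a::field"
  assumes "nonarch_local_field TYPE('a)"
    and "(2::'a) \<noteq> 0"
    and "\<alpha> \<noteq> 0" and "\<not> (\<exists>x::'a. x * x = \<alpha>)"
  shows "GSp4 = setmult KlingenQ (Hgrp \<alpha>)
       \<and> GSp4 = setmult SiegelP (Hgrp \<alpha>) \<union> setmult (setmult SiegelP {s2}) (Hgrp \<alpha>)
       \<and> setmult SiegelP (Hgrp \<alpha>) \<inter> setmult (setmult SiegelP {s2}) (Hgrp \<alpha>) = {}"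
proof -
  have al: "\<alpha> \<noteq> 0" and ns: "\<not> (\<exists>x::'a. x * x = \<alpha>)" using assms by auto
  have HG: "\<And>h. h \<in> Hgrp \<alpha> \<Longrightarrow> h \<in> GSp4" using H_GSp4[OF al] by blast
  have PG: "\<And>p. p \<in> (SiegelP :: 'a mat set) \<Longrightarrow> p \<in> GSp4" unfolding SiegelP_def by auto
  have QG: "\<And>p. p \<in> (KlingenQ :: 'a mat set) \<Longrightarrow> p \<in> GSp4" unfolding KlingenQ_def by auto
  have decompA: "\<And>g m b d. g \<in> carrier_mat 4 4 \<Longrightarrow> snd (Kdet \<alpha> (m$$(0,0), m$$(1,0)) b (m$$(2,0), m$$(3,0) / \<alpha>) d) = 0
     \<Longrightarrow> fst (Kdet \<alpha> (m$$(0,0), m$$(1,0)) b (m$$(2,0), m$$(3,0) / \<alpha>) d) \<noteq> 0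
     \<Longrightarrow> g * embH \<alpha> (m$$(0,0), m$$(1,0)) b (m$$(2,0), m$$(3,0) / \<alpha>) d * Hinv \<alpha> (m$$(0,0), m$$(1,0)) b (m$$(2,0), m$$(3,0) / \<alpha>) d = g"
  proof -
    fix g :: "'a mat" and m b d
    assume gc: "g \<in> carrier_mat 4 4"
      and h: "snd (Kdet \<alpha> (m$$(0,0), m$$(1,0)) b (m$$(2,0), m$$(3,0) / \<alpha>) d) = 0"
      "fst (Kdet \<alpha> (m$$(0,0), m$$(1,0)) b (m$$(2,0), m$$(3,0) / \<alpha>) d) \<noteq> 0"
    show "g * embH \<alpha> (m$$(0,0), m$$(1,0)) b (m$$(2,0), m$$(3,0) / \<alpha>) d * Hinv \<alpha> (m$$(0,0), m$$(1,0)) b (m$$(2,0), m$$(3,0) / \<alpha>) d = g"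
      using assoc_mult_mat[OF gc embH_carrier Hinv_carrier] embH_inv[OF al h] gc by simp
  qed
  have part1: "GSp4 = setmult KlingenQ (Hgrp \<alpha>)"
  proof
    show "GSp4 \<subseteq> setmult KlingenQ (Hgrp \<alpha>)"
    proof
      fix g :: "'a mat" assume G: "g \<in> GSp4"
      then obtain l where gc: "g \<in> carrier_mat 4 4" and dg: "det g \<noteq> 0" using GSp4_E by metis
      obtain m where mc: "m \<in> carrier_mat 4 4" and gm: "g * m = 1\<^sub>m 4" using right_inv[OF gc dg] by blast
      obtain b d where h: "snd (Kdet \<alpha> (m$$(0,0), m$$(1,0)) b (m$$(2,0), m$$(3,0) / \<alpha>) d) = 0"
        "fst (Kdet \<alpha> (m$$(0,0), m$$(1,0)) b (m$$(2,0), m$$(3,0) / \<alpha>) d) \<noteq> 0"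
        and col: "\<And>i. i < 4 \<Longrightarrow> (g * embH \<alpha> (m$$(0,0), m$$(1,0)) b (m$$(2,0), m$$(3,0) / \<alpha>) d)$$(i,0) = (g * m)$$(i,0)"
        using constrA[OF al ns gc mc gm] by blast
      define h' where "h' = embH \<alpha> (m$$(0,0), m$$(1,0)) b (m$$(2,0), m$$(3,0) / \<alpha>) d"
      define q where "q = g * h'"
      have qG: "q \<in> GSp4" unfolding q_def h'_def by (rule GSp4_mult[OF G HG[OF embH_in_H[OF h]]])
      have "q \<in> KlingenQ"
        by (rule Q_intro[OF qG]) (use col gm in \<open>simp_all add: q_def h'_def\<close>)
      moreover have "Hinv \<alpha> (m$$(0,0), m$$(1,0)) b (m$$(2,0), m$$(3,0) / \<alpha>) d \<in> Hgrp \<alpha>"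
        by (rule Hinv_H[OF al h])
      moreover have "g = q * Hinv \<alpha> (m$$(0,0), m$$(1,0)) b (m$$(2,0), m$$(3,0) / \<alpha>) d"
        unfolding q_def h'_def using decompA[OF gc h] by simp
      ultimately show "g \<in> setmult KlingenQ (Hgrp \<alpha>)" unfolding setmult_def by blast
    qed
    show "setmult KlingenQ (Hgrp \<alpha>) \<subseteq> GSp4"
      unfolding setmult_def using GSp4_mult QG HG by blast
  qed
  have part2: "GSp4 \<subseteq> setmult SiegelP (Hgrp \<alpha>) \<union> setmult (setmult SiegelP {s2}) (Hgrp \<alpha>)"
  proof
    fix g :: "'a mat" assume G: "g \<in> GSp4"
    then obtain l where gc: "g \<in> carrier_mat 4 4" and dg: "det g \<noteq> 0" and l: "l \<noteq> 0"
      and e: "transpose_mat g * Jmat * g = l \<cdot>\<^sub>m Jmat" using GSp4_E by metis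
    obtain m where mc: "m \<in> carrier_mat 4 4" and gm: "g * m = 1\<^sub>m 4" using right_inv[OF gc dg] by blast
    note rw = rows_from_inv[OF gc mc gm e]
    note rw2 = rw[simplified]
    have om: "m$$(0,0)*m$$(2,1) + m$$(1,0)*m$$(3,1) - m$$(2,0)*m$$(0,1) - m$$(3,0)*m$$(1,1) = 0"
    proof -
      have "(g*m)$$(2,1) = g$$(2,0)*m$$(0,1) + g$$(2,1)*m$$(1,1)+g$$(2,2)*m$$(2,1)+g$$(2,3)*m$$(3,1)"
        by (rule mult4[OF gc mc]) simp_all
      also have "\<dots> = l * (m$$(0,0)*m$$(2,1) + m$$(1,0)*m$$(3,1) - m$$(2,0)*m$$(0,1) - m$$(3,0)*m$$(1,1))"
        unfolding rw by (simp add: algebra_simps)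
      finally have "(g*m)$$(2,1) = l * (m$$(0,0)*m$$(2,1) + m$$(1,0)*m$$(3,1) - m$$(2,0)*m$$(0,1) - m$$(3,0)*m$$(1,1))" .
      moreover have "(g*m)$$(2,1) = 0" using gm by simp
      ultimately show ?thesis using l by simp
    qed
    define F where "F = m$$(0,0)*m$$(3,1) + \<alpha>*m$$(1,0)*m$$(2,1) - \<alpha>*m$$(1,1)*m$$(2,0) - m$$(0,1)*m$$(3,0)"
    show "g \<in> setmult SiegelP (Hgrp \<alpha>) \<union> setmult (setmult SiegelP {s2}) (Hgrp \<alpha>)"
    proof (cases "F = 0")
      case True
      obtain b d where h: "snd (Kdet \<alpha> (m$$(0,0), m$$(1,0)) b (m$$(2,0), m$$(3,0) / \<alpha>) d) = 0"
        "fst (Kdet \<alpha> (m$$(0,0), m$$(1,0)) b (m$$(2,0), m$$(3,0) / \<alpha>) d) \<noteq> 0"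
        and col: "\<And>i. i < 4 \<Longrightarrow> (g * embH \<alpha> (m$$(0,0), m$$(1,0)) b (m$$(2,0), m$$(3,0) / \<alpha>) d)$$(i,0) = (g * m)$$(i,0)"
        using constrA[OF al ns gc mc gm] by blast
      define h' where "h' = embH \<alpha> (m$$(0,0), m$$(1,0)) b (m$$(2,0), m$$(3,0) / \<alpha>) d"
      define q where "q = g * h'"
      have qG: "q \<in> GSp4" unfolding q_def h'_def by (rule GSp4_mult[OF G HG[OF embH_in_H[OF h]]])
      have q21: "q$$(2,1) = 0"
        unfolding q_def h'_def using al
        by (simp add: mult4[OF gc embH_carrier] embH_idx rw rw2 field_simps del: index_mult_mat)
      have "q$$(3,1) = - l * F"
        unfolding q_def h'_def F_def using al
        by (simp add: mult4[OF gc embH_carrier] embH_idx rw rw2 field_simps del: index_mult_mat)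
      then have q31: "q$$(3,1) = 0" using True by simp
      have "q \<in> SiegelP"
        by (rule P_intro[OF qG]) (use col gm q21 q31 in \<open>simp_all add: q_def h'_def\<close>)
      moreover have "Hinv \<alpha> (m$$(0,0), m$$(1,0)) b (m$$(2,0), m$$(3,0) / \<alpha>) d \<in> Hgrp \<alpha>"
        by (rule Hinv_H[OF al h])
      moreover have "g = q * Hinv \<alpha> (m$$(0,0), m$$(1,0)) b (m$$(2,0), m$$(3,0) / \<alpha>) d"
        unfolding q_def h'_def using decompA[OF gc h] by simp
      ultimately show ?thesis unfolding setmult_def by blast
    next
      case False
      define a where "a = (m$$(0,0), m$$(1,0))"
      define c where "c = (m$$(2,0), m$$(3,0) / \<alpha>)"
      define b where "b = (\<alpha> * m$$(1,1), m$$(0,1))"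
      define d where "d = (m$$(3,1), m$$(2,1))"
      have h1: "snd (Kdet \<alpha> a b c d) = 0"
        using om al unfolding a_def b_def c_def d_def by (simp add: Kdet_def Kmul_def field_simps)
      have "fst (Kdet \<alpha> a b c d) = F"
        using al unfolding a_def b_def c_def d_def F_def by (simp add: Kdet_def Kmul_def field_simps)
      then have h2: "fst (Kdet \<alpha> a b c d) \<noteq> 0" using False by simp
      define h' where "h' = embH \<alpha> a b c d"
      have h'G: "h' \<in> GSp4" unfolding h'_def by (rule HG[OF embH_in_H[OF h1 h2]])
      define k where "k = h' * s2inv"
      have kc: "k \<in> carrier_mat 4 4" unfolding k_def h'_def by (simp add: mc4)
      have k0: "\<And>r. r < 4 \<Longrightarrow> k$$(r,0) = m$$(r,0)"
      proof -
        fix r :: nat assume "r < 4"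
        then have "r = 0 \<or> r = 1 \<or> r = 2 \<or> r = 3" by auto
        then show "k$$(r,0) = m$$(r,0)" unfolding k_def h'_def a_def b_def c_def d_def using al
          by (auto simp: mult4[OF embH_carrier s2inv_carrier] embH_idx s2inv_idx simp del: index_mult_mat)
      qed
      have k1: "\<And>r. r < 4 \<Longrightarrow> k$$(r,1) = m$$(r,1)"
      proof -
        fix r :: nat assume "r < 4"
        then have "r = 0 \<or> r = 1 \<or> r = 2 \<or> r = 3" by auto
        then show "k$$(r,1) = m$$(r,1)" unfolding k_def h'_def a_def b_def c_def d_def using al
          by (auto simp: mult4[OF embH_carrier s2inv_carrier] embH_idx s2inv_idx simp del: index_mult_mat)
      qed
      define p where "p = g * k"
      have pG: "p \<in> GSp4" unfolding p_def k_def by (rule GSp4_mult[OF G GSp4_mult[OF h'G s2inv_GSp4]])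
      have pm: "\<And>i j. i < 4 \<Longrightarrow> j < 2 \<Longrightarrow> p$$(i,j) = (g*m)$$(i,j)"
      proof -
        fix i j :: nat assume i: "i < 4" and j: "j < 2"
        then have "j = 0 \<or> j = 1" by auto
        then show "p$$(i,j) = (g*m)$$(i,j)" unfolding p_def
          using colm[OF gc kc mc _ _ _ _ _ i, of 0] colm[OF gc kc mc _ _ _ _ _ i, of 1] k0 k1 by auto
      qed
      have "p \<in> SiegelP"
        by (rule P_intro[OF pG]) (use pm gm in auto)
      then have "p * s2 \<in> setmult SiegelP {s2}" unfolding setmult_def by blast
      moreover have "Hinv \<alpha> a b c d \<in> Hgrp \<alpha>" by (rule Hinv_H[OF al h1 h2])
      moreover have "g = (p * s2) * Hinv \<alpha> a b c d"
      proof -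
        have hc: "h' \<in> carrier_mat 4 4" unfolding h'_def by simp
        have "p * s2 = g * h'"
        proof -
          have "p * s2 = g * (k * s2)" unfolding p_def by (rule assoc_mult_mat[OF gc kc s2_carrier])
          also have "k * s2 = h' * (s2inv * s2)" unfolding k_def by (rule assoc_mult_mat[OF hc s2inv_carrier s2_carrier])
          also have "\<dots> = h'" using hc by (simp add: s2inv_s2)
          finally show ?thesis .
        qed
        then show ?thesis using decompA[OF gc, of m b d] h1 h2 unfolding h'_def a_def c_def by simp
      qed
      ultimately show ?thesis unfolding setmult_def by blast
    qed
  qed
  have part2': "setmult SiegelP (Hgrp \<alpha>) \<union> setmult (setmult SiegelP {s2}) (Hgrp \<alpha>) \<subseteq> GSp4"
    unfolding setmult_def using GSp4_mult PG HG s2_GSp4 by blast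
  have part3: "setmult SiegelP (Hgrp \<alpha>) \<inter> setmult (setmult SiegelP {s2}) (Hgrp \<alpha>) = {}"
  proof (rule ccontr)
    assume "\<not> ?thesis"
    then obtain x where x1: "x \<in> setmult SiegelP (Hgrp \<alpha>)" and x2: "x \<in> setmult (setmult SiegelP {s2}) (Hgrp \<alpha>)"
      by blast
    from x1 obtain p1 a1 b1 c1 d1 where P1: "p1 \<in> SiegelP" and x: "x = p1 * embH \<alpha> a1 b1 c1 d1"
      and h1: "snd (Kdet \<alpha> a1 b1 c1 d1) = 0"
      unfolding setmult_def Hgrp_def by blast
    from x2 obtain p2 a2 b2 c2 d2 where P2: "p2 \<in> SiegelP" and x': "x = (p2 * s2) * embH \<alpha> a2 b2 c2 d2"
      and h2: "snd (Kdet \<alpha> a2 b2 c2 d2) = 0" and n2: "fst (Kdet \<alpha> a2 b2 c2 d2) \<noteq> 0"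
      unfolding setmult_def Hgrp_def by blast
    note d1 = P_dest[OF P1] and d2 = P_dest[OF P2]
    have p1c: "p1 \<in> carrier_mat 4 4" and p2c: "p2 \<in> carrier_mat 4 4"
      using d1(6) d2(6) unfolding GSp4_def by auto
    have "Dl \<alpha> x = fst (Kdet \<alpha> a1 b1 c1 d1) * Dl \<alpha> p1" unfolding x by (rule Dl_H[OF p1c al h1])
    also have "Dl \<alpha> p1 = 0" by (rule Dl_P0[OF d1(1-4)])
    finally have z: "Dl \<alpha> x = 0" by simp
    have ps: "p2 * s2 \<in> carrier_mat 4 4" using p2c by (simp add: mc4)
    have "Dl \<alpha> x = fst (Kdet \<alpha> a2 b2 c2 d2) * Dl \<alpha> (p2 * s2)" unfolding x' by (rule Dl_H[OF ps al h2])
    also have "Dl \<alpha> (p2 * s2) = (p2$$(2,2)*p2$$(3,3) - p2$$(2,3)*p2$$(3,2)) * Dl \<alpha> s2"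
      by (rule Dl_P[OF p2c s2_carrier d2(1-4)])
    finally have "Dl \<alpha> x = fst (Kdet \<alpha> a2 b2 c2 d2) * (p2$$(2,2)*p2$$(3,3) - p2$$(2,3)*p2$$(3,2))"
      by (simp add: Dl_s2)
    then have "Dl \<alpha> x \<noteq> 0" using n2 d2(5) by simp
    with z show False by simp
  qed
  show ?thesis using part1 part2 part2' part3 by blast
qed


end
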